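(* Let $X=\{x_1,\overline{x_1},x_2,\overline{x_2},\dots\}$ and let $F(X)$ be the free involutive monoid on $X$. There is an isomorphism of categories \[E\colon \coprod_{m\ge0}\bigl(\mathcal{IF}(m)\times_{H_m}X^m\bigr)\to T(F(X))\] induced from the evaluation functors $\mathcal{IF}(m)\times X^m\to T(F(X))$ given on objects by $(f,y_1,\dots,y_m)\mapsto \mathsf H_{F(X)}(f)(y_1,\dots,y_m)$.
   Context: An involutive monoid is a monoid with an involutive anti-automorphism $m\mapsto\overline m$; $F(X)$ is the free such monoid in which the involution of $x_i$ is $\overline{x_i}$ (its elements are words in $X$). Let $C_2=\{1,t\}$. The category $\Delta H_+$: objects $[n]=\{0,\dots,n\}$ for $n\ge -1$ ($[-1]=\emptyset$); a morphism $f:[n]\to[m]$ is a map of sets with a total order on each fibre and a $C_2$-label on each element of $[n]$; the composite $g\circ f$ has fibre over $i$ equal to the concatenation, in the order of $g^{-1}(i)$, of the fibres $f^{-1}(j)$, each replaced by $f^{-1}(j)^t$ (order reversed, labels multiplied by $t$) when $j$ has label $t$ in $g$. The automorphism group of $[m-1]$ is the hyperoctahedral group $H_m=C_2^m\rtimes\Sigma_m$. For an involutive monoid $M$, $f:[p-1]\to[q-1]$ and $\mathbf m\in M^p$, $\mathsf H_M(f)(\mathbf m)=(b_0,\dots,b_{q-1})$ with $b_i$ the product in the order of $f^{-1}(i)$ of $m_x$ (label $1$) or $\overline{m_x}$ (label $t$), empty product $1$. The tuple category $T(M)$ has objects all finite (possibly empty) tuples in $M$ and, for each $f\in\mathrm{Hom}_{\Delta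 H_+}([p-1],[q-1])$ and $\mathbf m\in M^p$, a morphism $(f,\mathbf m):\mathbf m\to\mathsf H_M(f)(\mathbf m)$, with composition induced from $\Delta H_+$. $\mathcal{IF}(m)$ is the under-category $[m-1]\downarrow\Delta H_+$ (objects: morphisms $f$ out of $[m-1]$; morphisms $f\to g\circ f$ given by $g$), with right $H_m$-action $f\bullet h=f\circ h$. $X^m$ is regarded as a discrete category with left $H_m$-action $h\cdot\mathbf y=\mathsf H_{F(X)}(h)(\mathbf y)$ (applying the involution to the labelled coordinates and permuting). $\mathcal{IF}(m)\times_{H_m}X^m$ is the quotient of the product category by $(f\circ h,\mathbf y)\sim(f,h\cdot\mathbf y)$. The evaluation functor sends a morphism $g:f\to g\circ f$ at $\mathbf y$ to the morphism $(g,\mathsf H_{F(X)}(f)(\mathbf y))$ of $T(F(X))$. *)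

theory Defs
  imports Main
begin

record ('o, 'a) cat =
  Obj :: "'o set"
  Mor :: "'a set"
  Dom :: "'a \<Rightarrow> 'o"
  Cod :: "'a \<Rightarrow> 'o"
  Idm :: "'o \<Rightarrow> 'a"
  Comp :: "'a \<Rightarrow> 'a \<Rightarrow> 'a"   (* Comp g f = g o f, defined when Cod f = Dom g *)

definition cat_iso :: "('o, 'a) cat \<Rightarrow> ('p, 'b) cat \<Rightarrow> ('o \<Rightarrow> 'p) \<Rightarrow> ('a \<Rightarrow> 'b) \<Rightarrow> bool" where
  "cat_iso C D Fo Fm \<longleftrightarrow>
     bij_betw Fo (Obj C) (Obj D) \<and> bij_betw Fm (Mor C) (Mor D) \<and>
     (\<forall>a\<in>Mor C. Fo (Dom C a) = Dom D (Fm a) \<and> Fo (Cod C a) = Cod D (Fm a)) \<and>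
     (\<forall>x\<in>Obj C. Fm (Idm C x) = Idm D (Fo x)) \<and>
     (\<forall>a\<in>Mor C. \<forall>b\<in>Mor C. Cod C a = Dom C b \<longrightarrow> Fm (Comp C b a) = Comp D (Fm b) (Fm a))"

text \<open>The object [n] (n \<ge> -1) is represented by its cardinality n+1 :: nat.
  A morphism [p-1] \<rightarrow> [q-1] is represented by the list (of length q) of its fibres,
  each fibre being the list, in its total order, of its elements together with their
  C_2-label (False = 1, True = t).\<close>

type_synonym dhmor = "(nat \<times> bool) list list"

definition dhom :: "nat \<Rightarrow> nat \<Rightarrow> dhmor set" where
  "dhom p q = {f. length f = q \<and> distinct (map fst (concat f)) \<and> set (map fst (concat f)) = {0..<p}}"

definition dh_id :: "nat \<Rightarrow> dhmor" where
  "dh_id m = map (\<lambda>i. [(i, False)]) [0..<m]"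

text \<open>F^t: order reversed, labels multiplied by t.\<close>
definition fibre_t :: "(nat \<times> bool) list \<Rightarrow> (nat \<times> bool) list" where
  "fibre_t F = rev (map (\<lambda>(x, l). (x, \<not> l)) F)"

definition dh_comp :: "dhmor \<Rightarrow> dhmor \<Rightarrow> dhmor" where
  "dh_comp g f = map (\<lambda>G. concat (map (\<lambda>(j, l). if l then fibre_t (f ! j) else f ! j) G)) g"

definition dh_aut :: "nat \<Rightarrow> dhmor set" where
  "dh_aut m = {h \<in> dhom m m. \<exists>h'\<in>dhom m m. dh_comp h' h = dh_id m \<and> dh_comp h h' = dh_id m}"

text \<open>Letters: (i, False) is x_i, (i, True) is its involute. Words are lists of letters,
  the product is concatenation, the unit is the empty word.\<close>
type_synonym letter = "nat \<times> bool"
type_synonym word = "letter list"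

definition winv :: "word \<Rightarrow> word" where
  "winv w = rev (map (\<lambda>(i, b). (i, \<not> b)) w)"

definition HF :: "dhmor \<Rightarrow> word list \<Rightarrow> word list" where
  "HF f ms = map (\<lambda>F. concat (map (\<lambda>(x, l). if l then winv (ms ! x) else ms ! x) F)) f"

text \<open>X^m, viewed inside F(X)^m (tuples of one-letter words).\<close>
definition Xpow :: "nat \<Rightarrow> word list set" where
  "Xpow m = {ys. length ys = m \<and> (\<forall>w\<in>set ys. length w = 1)}"

definition TF :: "(word list, dhmor \<times> word list) cat" where
  "TF = \<lparr> Obj = UNIV,
          Mor = {(f, ms). f \<in> dhom (length ms) (length f)},
          Dom = (\<lambda>(f, ms). ms),
          Cod = (\<lambda>(f, ms). HF f ms),
          Idm = (\<lambda>ms. (dh_id (length ms), ms)),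
          Comp = (\<lambda>(g, ms') (f, ms). (dh_comp g f, ms)) \<rparr>"

text \<open>Objects (m, f, y): f : [m-1] \<rightarrow> [q-1], y \<in> X^m.
  Morphisms (m, f, g, y): the morphism g : f \<rightarrow> g o f of IF(m), at y.\<close>

definition IFX_obj :: "(nat \<times> dhmor \<times> word list) set" where
  "IFX_obj = {(m, f, y). f \<in> dhom m (length f) \<and> y \<in> Xpow m}"

definition IFX_mor :: "(nat \<times> dhmor \<times> dhmor \<times> word list) set" where
  "IFX_mor = {(m, f, g, y). f \<in> dhom m (length f) \<and> g \<in> dhom (length f) (length g) \<and> y \<in> Xpow m}"

definition IFX_dom :: "nat \<times> dhmor \<times> dhmor \<times> word list \<Rightarrow> nat \<times> dhmor \<times> word list" where
  "IFX_dom = (\<lambda>(m, f, g, y). (m, f, y))"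

definition IFX_cod :: "nat \<times> dhmor \<times> dhmor \<times> word list \<Rightarrow> nat \<times> dhmor \<times> word list" where
  "IFX_cod = (\<lambda>(m, f, g, y). (m, dh_comp g f, y))"

definition IFX_id :: "nat \<times> dhmor \<times> word list \<Rightarrow> nat \<times> dhmor \<times> dhmor \<times> word list" where
  "IFX_id = (\<lambda>(m, f, y). (m, f, dh_id (length f), y))"

definition IFX_comp :: "nat \<times> dhmor \<times> dhmor \<times> word list \<Rightarrow> nat \<times> dhmor \<times> dhmor \<times> word list
                         \<Rightarrow> nat \<times> dhmor \<times> dhmor \<times> word list" where
  "IFX_comp = (\<lambda>(m', f', k, y') (m, f, g, y). (m, f, dh_comp k g, y))"

definition obj_gen :: "((nat \<times> dhmor \<times> word list) \<times> (nat \<times> dhmor \<times> word list)) set" where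
  "obj_gen = {((m, dh_comp f h, y), (m, f, HF h y)) | m f h y.
               f \<in> dhom m (length f) \<and> h \<in> dh_aut m \<and> y \<in> Xpow m}"

definition mor_gen :: "((nat \<times> dhmor \<times> dhmor \<times> word list) \<times> (nat \<times> dhmor \<times> dhmor \<times> word list)) set" where
  "mor_gen = {((m, dh_comp f h, g, y), (m, f, g, HF h y)) | m f g h y.
               f \<in> dhom m (length f) \<and> g \<in> dhom (length f) (length g) \<and> h \<in> dh_aut m \<and> y \<in> Xpow m}"

definition obj_rel where "obj_rel = (obj_gen \<union> obj_gen\<inverse>)\<^sup>*"
definition mor_rel where "mor_rel = (mor_gen \<union> mor_gen\<inverse>)\<^sup>*"

definition IFX_quot :: "((nat \<times> dhmor \<times> word list) set, (nat \<times> dhmor \<times> dhmor \<times> word list) set) cat" where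
  "IFX_quot = \<lparr> Obj = IFX_obj // obj_rel,
                Mor = IFX_mor // mor_rel,
                Dom = (\<lambda>A. obj_rel `` {IFX_dom (SOME a. a \<in> A)}),
                Cod = (\<lambda>A. obj_rel `` {IFX_cod (SOME a. a \<in> A)}),
                Idm = (\<lambda>X. mor_rel `` {IFX_id (SOME x. x \<in> X)}),
                Comp = (\<lambda>B A. let a = (SOME a. a \<in> A);
                                   b = (SOME b. b \<in> B \<and> IFX_dom b = IFX_cod a)
                               in mor_rel `` {IFX_comp b a}) \<rparr>"

definition eval_obj :: "nat \<times> dhmor \<times> word list \<Rightarrow> word list" where
  "eval_obj = (\<lambda>(m, f, y). HF f y)"

definition eval_mor :: "nat \<times> dhmor \<times> dhmor \<times> word list \<Rightarrow> dhmor \<times> word list" where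
  "eval_mor = (\<lambda>(m, f, g, y). (g, HF f y))"

definition E_obj :: "(nat \<times> dhmor \<times> word list) set \<Rightarrow> word list" where
  "E_obj A = eval_obj (SOME a. a \<in> A)"

definition E_mor :: "(nat \<times> dhmor \<times> dhmor \<times> word list) set \<Rightarrow> dhmor \<times> word list" where
  "E_mor A = eval_mor (SOME a. a \<in> A)"

end

theory Submission
  imports Defs
begin

lemma winv_Nil[simp]: "winv [] = []" by (simp add: winv_def)

lemma winv_winv[simp]: "winv (winv w) = w"
  by (induct w) (auto simp: winv_def case_prod_beta)

lemma winv_append[simp]: "winv (a @ b) = winv b @ winv a"
  by (simp add: winv_def)

lemma winv_concat: "winv (concat L) = concat (rev (map winv L))"
  by (induct L) auto

lemma length_winv[simp]: "length (winv w) = length w"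
  by (simp add: winv_def)

definition ev :: "word list \<Rightarrow> nat \<times> bool \<Rightarrow> word" where
  "ev y = (\<lambda>(x, l). if l then winv (y ! x) else y ! x)"

lemma HF_ev: "HF f y = map (\<lambda>F. concat (map (ev y) F)) f"
  by (simp add: HF_def ev_def)

lemma ev_fibre_t: "concat (map (ev y) (fibre_t F)) = winv (concat (map (ev y) F))"
  by (induct F) (auto simp: fibre_t_def ev_def winv_concat)

lemma ev_HF: "j < length f \<Longrightarrow> ev (HF f y) (j, l) = concat (map (ev y) (if l then fibre_t (f!j) else f!j))"
  by (simp add: ev_fibre_t) (simp add: HF_ev ev_def)

lemma HF_comp_aux:
  assumes "\<forall>(j, l) \<in> set G. j < length f"
  shows "concat (map (ev y) (concat (map (\<lambda>(j, l). if l then fibre_t (f ! j) else f ! j) G)))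
    = concat (map (ev (HF f y)) G)"
  using assms
  by (induct G) (auto simp: ev_HF)

lemma HF_comp:
  assumes "\<forall>(j, l) \<in> set (concat g). j < length f"
  shows "HF (dh_comp g f) y = HF g (HF f y)"
proof -
  have "HF (dh_comp g f) y = map (\<lambda>G. concat (map (ev y) (concat (map (\<lambda>(j, l). if l then fibre_t (f ! j) else f ! j) G)))) g"
    by (simp add: HF_ev dh_comp_def)
  also have "\<dots> = map (\<lambda>G. concat (map (ev (HF f y)) G)) g"
    using assms by (intro map_cong refl HF_comp_aux) auto
  finally show ?thesis by (simp add: HF_ev)
qed

lemma dhom_idx: "f \<in> dhom m q \<Longrightarrow> (j, l) \<in> set (concat f) \<Longrightarrow> j < m"
  unfolding dhom_def by force

lemma dhom_idx': "f \<in> dhom m q \<Longrightarrow> \<forall>(j, l) \<in> set (concat f). j < m"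
  using dhom_idx by blast

lemma dhom_len: "f \<in> dhom m q \<Longrightarrow> length (concat f) = m"
proof -
  assume "f \<in> dhom m q"
  then have d: "distinct (map fst (concat f))" and s: "set (map fst (concat f)) = {0..<m}"
    unfolding dhom_def by auto
  have "length (concat f) = length (map fst (concat f))" by simp
  also have "\<dots> = card (set (map fst (concat f)))" using distinct_card[OF d] by simp
  also have "\<dots> = m" using s by simp
  finally show ?thesis .
qed

lemma dhom_idx2: "f \<in> dhom m q \<Longrightarrow> G \<in> set f \<Longrightarrow> (j, l) \<in> set G \<Longrightarrow> j < m"
  by (rule dhom_idx) auto

lemma length_HF[simp]: "length (HF f y) = length f"
  by (simp add: HF_def)

fun canon :: "nat \<Rightarrow> nat list \<Rightarrow> dhmor" where
  "canon s [] = []"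
| "canon s (n # ns) = map (\<lambda>i. (i, False)) [s..<s+n] # canon (s+n) ns"

lemma length_canon[simp]: "length (canon s ls) = length ls"
  by (induct ls arbitrary: s) auto

lemma concat_canon: "concat (canon s ls) = map (\<lambda>i. (i, False)) [s..<s + sum_list ls]"
proof (induct ls arbitrary: s)
  case Nil then show ?case by simp
next
  case (Cons n ns)
  have "[s..<s + sum_list (n # ns)] = [s..<s+n] @ [s+n..<s+n+sum_list ns]"
    using upt_add_eq_append[of s "s+n" "sum_list ns"] by (simp add: add.assoc)
  then show ?case using Cons by simp
qed


lemma canon_dhom: "canon 0 ls \<in> dhom (sum_list ls) (length ls)"
proof -
  have "map fst (concat (canon 0 ls)) = [0..<sum_list ls]"
    unfolding concat_canon by (simp add: comp_def)
  then show ?thesis unfolding dhom_def mem_Collect_eq by (simp only:) simp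
qed


lemma singletons: "(\<forall>x\<in>set L. length x = 1) \<Longrightarrow> map (\<lambda>c. [c]) (concat L) = L"
proof (induct L)
  case (Cons a L) then show ?case by (cases a) auto
qed simp

lemma HF_canon_aux:
  "z = map (\<lambda>c. [c]) (p @ concat b @ r) \<Longrightarrow> HF (canon (length p) (map length b)) z = b"
proof (induct b arbitrary: p)
  case Nil then show ?case by (simp add: HF_def)
next
  case (Cons w b)
  have "HF (canon (length p) (map length (w # b))) z =
     concat (map (\<lambda>i. z ! i) [length p..<length p + length w]) # HF (canon (length (p @ w)) (map length b)) z"
    by (simp add: HF_def comp_def)
  also have "HF (canon (length (p @ w)) (map length b)) z = b"
    using Cons.hyps[of "p @ w"] Cons.prems by simp
  also have "map (\<lambda>i. z ! i) [length p..<length p + length w] = map (\<lambda>c. [c]) w"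
    using Cons.prems by (intro nth_equalityI) (auto simp: nth_append)
  finally show ?case by (simp add: singletons)
qed

lemma HF_canon: "HF (canon 0 (map length b)) (map (\<lambda>c. [c]) (concat b)) = b"
  using HF_canon_aux[of _ "[]" b "[]"] by simp

lemma Xpow_singletons: "map (\<lambda>c. [c]) w \<in> Xpow (length w)"
  by (auto simp: Xpow_def)


lemma dh_comp_Cons: "dh_comp (G # gs) f = concat (map (\<lambda>(j, l). if l then fibre_t (f ! j) else f ! j) G) # dh_comp gs f"
  by (simp add: dh_comp_def)

lemma dh_comp_Nil: "dh_comp [] f = []"
  by (simp add: dh_comp_def)

lemma canon_comp_aux:
  "c = p @ concat fs @ r \<Longrightarrow> dh_comp (canon (length p) (map length fs)) (map (\<lambda>x. [x]) c) = fs"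
proof (induct fs arbitrary: p)
  case Nil then show ?case by (simp add: dh_comp_Nil)
next
  case (Cons w fs)
  have "dh_comp (canon (length p) (map length (w # fs))) (map (\<lambda>x. [x]) c) =
     concat (map (\<lambda>i. map (\<lambda>x. [x]) c ! i) [length p..<length p + length w]) # dh_comp (canon (length (p @ w)) (map length fs)) (map (\<lambda>x. [x]) c)"
    by (simp add: dh_comp_Cons comp_def)
  also have "dh_comp (canon (length (p @ w)) (map length fs)) (map (\<lambda>x. [x]) c) = fs"
    using Cons.hyps[of "p @ w"] Cons.prems by simp
  also have "map (\<lambda>i. map (\<lambda>x. [x]) c ! i) [length p..<length p + length w] = map (\<lambda>x. [x]) w"
    using Cons.prems by (intro nth_equalityI) (auto simp: nth_append)
  finally show ?case by (simp add: singletons)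
qed

lemma canon_comp: "dh_comp (canon 0 (map length f)) (map (\<lambda>x. [x]) (concat f)) = f"
  using canon_comp_aux[of _ "[]" f "[]"] by simp

lemma sum_list_len: "sum_list (map length f) = length (concat f)"
  by (simp add: length_concat)

lemma ev_single: "y \<in> Xpow m \<Longrightarrow> x < m \<Longrightarrow> length (ev y (x, l)) = 1"
  by (auto simp: ev_def Xpow_def)

lemma len_HF_fibres:
  assumes "f \<in> dhom m q" "y \<in> Xpow m"
  shows "map length (HF f y) = map length f"
proof -
  have "length (concat (map (ev y) F)) = length F" if "F \<in> set f" for F
  proof -
    have "\<forall>p\<in>set F. fst p < m" using that dhom_idx[OF assms(1)] by fastforce
    then show ?thesis using assms(2)
      by (induct F) (auto simp: length_concat ev_single split: prod.splits)
  qed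
  then show ?thesis by (simp add: HF_ev)
qed

lemma HF_flat:
  assumes "f \<in> dhom m q" "y \<in> Xpow m"
  shows "HF (map (\<lambda>x. [x]) (concat f)) y = map (\<lambda>c. [c]) (concat (HF f y))"
proof -
  have all: "\<forall>p\<in>set (concat f). fst p < m" using dhom_idx[OF assms(1)] by fastforce
  have "HF (map (\<lambda>x. [x]) (concat f)) y = map (ev y) (concat f)"
    by (simp add: HF_ev comp_def)
  moreover have "concat (HF f y) = concat (map (ev y) (concat f))"
    unfolding HF_ev by (induct f) auto
  moreover have "\<forall>w\<in>set (map (ev y) (concat f)). length w = 1"
    using all assms(2) ev_single by fastforce
  ultimately show ?thesis by (simp add: singletons)
qed


lemma flat_aut:
  assumes d: "distinct (map fst c)" and s: "set (map fst c) = {0..<m}"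
  shows "map (\<lambda>x. [x]) c \<in> dh_aut m"
proof -
  have lc: "length c = m"
    using distinct_card[OF d] s by simp
  define \<sigma> where "\<sigma> = (!) (map fst c)"
  have bij: "bij_betw \<sigma> {..<m} {..<m}"
    unfolding \<sigma>_def using bij_betw_nth[OF d] s lc by (simp add: lessThan_atLeast0)
  define \<tau> where "\<tau> = inv_into {..<m} \<sigma>"
  have bij2: "bij_betw \<tau> {..<m} {..<m}" unfolding \<tau>_def using bij by (rule bij_betw_inv_into)
  have st: "\<sigma> (\<tau> x) = x" if "x < m" for x
    unfolding \<tau>_def using bij that by (simp add: bij_betw_inv_into_right)
  have ts: "\<tau> (\<sigma> i) = i" if "i < m" for i
    unfolding \<tau>_def using bij that by (simp add: bij_betw_inv_into_left)
  have tm: "\<tau> x < m" if "x < m" for x using bij2 that by (auto dest: bij_betw_apply)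
  have sm: "\<sigma> i < m" if "i < m" for i using bij that by (auto dest: bij_betw_apply)
  have cx: "c ! i = (\<sigma> i, snd (c ! i))" if "i < m" for i
    unfolding \<sigma>_def using that lc by simp
  define h where "h = map (\<lambda>x. [x]) c"
  define h' where "h' = map (\<lambda>x. [(\<tau> x, snd (c ! \<tau> x))]) [0..<m]"
  have hd: "h \<in> dhom m m"
    unfolding h_def dhom_def using d s lc by (simp add: comp_def)
  have eqh: "map fst (concat h') = map \<tau> [0..<m]"
    unfolding h'_def by (induct m) auto
  moreover have "distinct (map \<tau> [0..<m])"
    using bij2 by (simp add: distinct_map bij_betw_def lessThan_atLeast0)
  moreover have "set (map \<tau> [0..<m]) = {0..<m}"
    using bij2 by (simp add: bij_betw_def lessThan_atLeast0)
  ultimately have h'd: "h' \<in> dhom m m"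
    unfolding dhom_def mem_Collect_eq eqh by (simp add: h'_def)
  have c1: "dh_comp h' h = dh_id m"
  proof (rule nth_equalityI)
    show "length (dh_comp h' h) = length (dh_id m)"
      by (simp add: dh_comp_def dh_id_def h'_def)
    fix x assume "x < length (dh_comp h' h)"
    then have x: "x < m" by (simp add: dh_comp_def h'_def)
    have "h ! \<tau> x = [(x, snd (c ! \<tau> x))]"
      unfolding h_def using tm[OF x] lc cx[OF tm[OF x]] st[OF x] by simp
    then show "dh_comp h' h ! x = dh_id m ! x"
      using x by (simp add: dh_comp_def dh_id_def h'_def fibre_t_def)
  qed
  have c2: "dh_comp h h' = dh_id m"
  proof (rule nth_equalityI)
    show "length (dh_comp h h') = length (dh_id m)"
      by (simp add: dh_comp_def dh_id_def h_def lc)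
    fix i assume "i < length (dh_comp h h')"
    then have i: "i < m" by (simp add: dh_comp_def h_def lc)
    have hi: "h ! i = [(\<sigma> i, snd (c ! i))]"
      unfolding h_def using i lc cx[OF i] by simp
    have h'i: "h' ! \<sigma> i = [(i, snd (c ! i))]"
      unfolding h'_def using sm[OF i] ts[OF i] by simp
    then show "dh_comp h h' ! i = dh_id m ! i"
    proof -
      have lh: "length h = m" using lc h_def by simp
      show ?thesis using i lh hi h'i by (simp add: dh_comp_def dh_id_def fibre_t_def)
    qed
  qed
  show ?thesis
    unfolding dh_aut_def using hd h'd c1 c2 h_def by blast
qed


definition R_obj :: "word list \<Rightarrow> nat \<times> dhmor \<times> word list" where
  "R_obj b = (length (concat b), canon 0 (map length b), map (\<lambda>c. [c]) (concat b))"

definition R_mor :: "dhmor \<Rightarrow> word list \<Rightarrow> nat \<times> dhmor \<times> dhmor \<times> word list" where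
  "R_mor g b = (length (concat b), canon 0 (map length b), g, map (\<lambda>c. [c]) (concat b))"

lemma decomp:
  assumes f: "f \<in> dhom m q" and y: "y \<in> Xpow m"
  shows "f = dh_comp (canon 0 (map length f)) (map (\<lambda>x. [x]) (concat f))"
    "canon 0 (map length f) \<in> dhom m (length (canon 0 (map length f)))"
    "map (\<lambda>x. [x]) (concat f) \<in> dh_aut m"
    "R_obj (HF f y) = (m, canon 0 (map length f), HF (map (\<lambda>x. [x]) (concat f)) y)"
    "length (canon 0 (map length f)) = length f"
proof -
  show "f = dh_comp (canon 0 (map length f)) (map (\<lambda>x. [x]) (concat f))"
    using canon_comp by simp
  show "canon 0 (map length f) \<in> dhom m (length (canon 0 (map length f)))"
    using canon_dhom[of "map length f"] dhom_len[OF f] by (simp add: sum_list_len)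
  show "map (\<lambda>x. [x]) (concat f) \<in> dh_aut m"
    using f unfolding dhom_def by (intro flat_aut) auto
  show "length (canon 0 (map length f)) = length f" by simp
  have l: "map length (HF f y) = map length f" by (rule len_HF_fibres[OF f y])
  have "length (concat (HF f y)) = m"
    using l dhom_len[OF f] by (metis sum_list_len)
  then show "R_obj (HF f y) = (m, canon 0 (map length f), HF (map (\<lambda>x. [x]) (concat f)) y)"
    unfolding R_obj_def using l HF_flat[OF f y] by simp
qed

lemma obj_canon:
  assumes "(m, f, y) \<in> IFX_obj"
  shows "((m, f, y), R_obj (HF f y)) \<in> obj_rel"
proof -
  from assms have f: "f \<in> dhom m (length f)" and y: "y \<in> Xpow m" by (auto simp: IFX_obj_def)
  note D = decomp[OF f y]
  have "((m, dh_comp (canon 0 (map length f)) (map (\<lambda>x. [x]) (concat f)), y),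
         (m, canon 0 (map length f), HF (map (\<lambda>x. [x]) (concat f)) y)) \<in> obj_gen"
    unfolding obj_gen_def using D(2,3) y by blast
  then have "((m, f, y), R_obj (HF f y)) \<in> obj_gen"
    using D(1,4) by simp
  then show ?thesis unfolding obj_rel_def by blast
qed

lemma mor_canon:
  assumes "(m, f, g, y) \<in> IFX_mor"
  shows "((m, f, g, y), R_mor g (HF f y)) \<in> mor_rel"
proof -
  from assms have f: "f \<in> dhom m (length f)" and y: "y \<in> Xpow m"
    and g: "g \<in> dhom (length f) (length g)" by (auto simp: IFX_mor_def)
  note D = decomp[OF f y]
  have "((m, dh_comp (canon 0 (map length f)) (map (\<lambda>x. [x]) (concat f)), g, y),
         (m, canon 0 (map length f), g, HF (map (\<lambda>x. [x]) (concat f)) y)) \<in> mor_gen"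
    unfolding mor_gen_def using D(2,3,5) y g by auto
  moreover have "R_mor g (HF f y) = (m, canon 0 (map length f), g, HF (map (\<lambda>x. [x]) (concat f)) y)"
    using D(4) by (simp add: R_mor_def R_obj_def)
  ultimately have "((m, f, g, y), R_mor g (HF f y)) \<in> mor_gen"
    using D(1) by simp
  then show ?thesis unfolding mor_rel_def by blast
qed

lemma aut_len: "h \<in> dh_aut m \<Longrightarrow> length h = m"
  by (auto simp: dh_aut_def dhom_def)

lemma obj_gen_eval: "(a, b) \<in> obj_gen \<Longrightarrow> eval_obj a = eval_obj b"
  unfolding obj_gen_def eval_obj_def
  by (auto simp: aut_len intro!: HF_comp dest: dhom_idx)

lemma mor_gen_eval: "(a, b) \<in> mor_gen \<Longrightarrow> eval_mor a = eval_mor b"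
  unfolding mor_gen_def eval_mor_def
  by (auto simp: aut_len intro!: HF_comp dest: dhom_idx)

lemma obj_rel_eval: "(a, b) \<in> obj_rel \<Longrightarrow> eval_obj a = eval_obj b"
  unfolding obj_rel_def
  by (induct rule: rtrancl_induct) (auto dest: obj_gen_eval)

lemma mor_rel_eval: "(a, b) \<in> mor_rel \<Longrightarrow> eval_mor a = eval_mor b"
  unfolding mor_rel_def
  by (induct rule: rtrancl_induct) (auto dest: mor_gen_eval)


lemma equiv_obj: "equiv UNIV obj_rel"
  unfolding obj_rel_def equiv_def
  by (auto simp: refl_on_def sym_rtrancl sym_Un_converse intro: trans_rtrancl)

lemma equiv_mor: "equiv UNIV mor_rel"
  unfolding mor_rel_def equiv_def
  by (auto simp: refl_on_def sym_rtrancl sym_Un_converse intro: trans_rtrancl)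

lemma some_obj: "(x, SOME a. a \<in> obj_rel `` {x}) \<in> obj_rel"
proof -
  have "x \<in> obj_rel `` {x}" unfolding obj_rel_def by simp
  then have "(SOME a. a \<in> obj_rel `` {x}) \<in> obj_rel `` {x}" by (rule someI)
  then show ?thesis by simp
qed

lemma some_mor: "(x, SOME a. a \<in> mor_rel `` {x}) \<in> mor_rel"
proof -
  have "x \<in> mor_rel `` {x}" unfolding mor_rel_def by simp
  then have "(SOME a. a \<in> mor_rel `` {x}) \<in> mor_rel `` {x}" by (rule someI)
  then show ?thesis by simp
qed

lemma E_obj_class: "E_obj (obj_rel `` {x}) = eval_obj x"
  unfolding E_obj_def using obj_rel_eval[OF some_obj] by simp

lemma E_mor_class: "E_mor (mor_rel `` {x}) = eval_mor x"
  unfolding E_mor_def using mor_rel_eval[OF some_mor] by simp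

lemma dom_proj: "(a, b) \<in> mor_rel \<Longrightarrow> (IFX_dom a, IFX_dom b) \<in> obj_rel"
  unfolding mor_rel_def obj_rel_def
proof (induct rule: rtrancl_induct)
  case (step b c)
  have "(IFX_dom b, IFX_dom c) \<in> obj_gen \<union> obj_gen\<inverse>"
    using step(2) unfolding mor_gen_def obj_gen_def IFX_dom_def by auto
  then show ?case using step(3) by (rule rtrancl_into_rtrancl[rotated])
qed simp

lemma lift:
  assumes "(a, b) \<in> obj_rel" "a = (m, f, y)" "g \<in> dhom (length f) (length g)"
  shows "((m, f, g, y), (fst b, fst (snd b), g, snd (snd b))) \<in> mor_rel \<and> length (fst (snd b)) = length f"
  using assms unfolding obj_rel_def
proof (induct rule: rtrancl_induct)
  case base then show ?case by (simp add: mor_rel_def)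
next
  case (step b c)
  then have IH: "((m, f, g, y), (fst b, fst (snd b), g, snd (snd b))) \<in> mor_rel"
    and L: "length (fst (snd b)) = length f" by auto
  have "((fst b, fst (snd b), g, snd (snd b)), (fst c, fst (snd c), g, snd (snd c))) \<in> mor_gen \<union> mor_gen\<inverse>
     \<and> length (fst (snd c)) = length f"
    using step(2) L step(5) unfolding mor_gen_def obj_gen_def
    by (auto simp: dh_comp_def)
  then show ?case using IH unfolding mor_rel_def by (meson rtrancl_into_rtrancl)
qed

definition Qm :: "nat \<times> dhmor \<times> dhmor \<times> word list \<Rightarrow> bool" where
  "Qm b = (case b of (m, f, g, y) \<Rightarrow> (\<forall>(j, l) \<in> set (concat g). j < length f))"

lemma Qm_class:
  assumes "(a, b) \<in> mor_rel" "a \<in> IFX_mor" shows "Qm b"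
  using assms(1) unfolding mor_rel_def
proof (cases rule: rtranclE)
  case base then show ?thesis using assms(2)
    by (auto simp: Qm_def IFX_mor_def dest: dhom_idx2)
next
  case (step c)
  then show ?thesis unfolding mor_gen_def
    by (auto simp: Qm_def dest: dhom_idx2 simp: dh_comp_def)
qed


lemma R_obj_in: "R_obj b \<in> IFX_obj"
  unfolding R_obj_def IFX_obj_def
  using canon_dhom[of "map length b"] Xpow_singletons[of "concat b"]
  by (simp add: sum_list_len)

lemma R_mor_in: "g \<in> dhom (length b) (length g) \<Longrightarrow> R_mor g b \<in> IFX_mor"
  unfolding R_mor_def IFX_mor_def
  using canon_dhom[of "map length b"] Xpow_singletons[of "concat b"]
  by (simp add: sum_list_len)

lemma eval_R_obj: "eval_obj (R_obj b) = b"
  by (simp add: R_obj_def eval_obj_def HF_canon)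

lemma eval_R_mor: "eval_mor (R_mor g b) = (g, b)"
  by (simp add: R_mor_def eval_mor_def HF_canon)

lemma obj_rel_R: "a \<in> IFX_obj \<Longrightarrow> (a, R_obj (eval_obj a)) \<in> obj_rel"
  using obj_canon by (cases a rule: prod_cases3) (auto simp: eval_obj_def)

lemma mor_rel_R: "a \<in> IFX_mor \<Longrightarrow> (a, R_mor (fst (eval_mor a)) (snd (eval_mor a))) \<in> mor_rel"
  using mor_canon by (cases a rule: prod_cases4) (auto simp: eval_mor_def)

lemma E_obj_bij: "bij_betw E_obj (IFX_obj // obj_rel) UNIV"
proof -
  have "inj_on E_obj (IFX_obj // obj_rel)"
  proof (rule inj_onI)
    fix A B assume A: "A \<in> IFX_obj // obj_rel" and B: "B \<in> IFX_obj // obj_rel" and e: "E_obj A = E_obj B"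
    obtain a where a: "a \<in> IFX_obj" "A = obj_rel `` {a}" using A by (auto elim: quotientE)
    obtain b where b: "b \<in> IFX_obj" "B = obj_rel `` {b}" using B by (auto elim: quotientE)
    have "eval_obj a = eval_obj b" using e a b by (simp add: E_obj_class)
    then have "(a, b) \<in> obj_rel"
    proof -
      have sy: "sym obj_rel" and tr: "trans obj_rel" using equiv_obj by (auto simp: equiv_def)
      have "(a, R_obj (eval_obj a)) \<in> obj_rel" using obj_rel_R[OF a(1)] by simp
      moreover have "(R_obj (eval_obj b), b) \<in> obj_rel" using obj_rel_R[OF b(1)] sy \<open>eval_obj a = eval_obj b\<close> by (auto dest: symD)
      ultimately show ?thesis using \<open>eval_obj a = eval_obj b\<close> tr by (auto dest: transD)
    qed
    then show "A = B" using a b equiv_class_eq[OF equiv_obj] by simp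
  qed
  moreover have "E_obj ` (IFX_obj // obj_rel) = UNIV"
  proof -
    have "b \<in> E_obj ` (IFX_obj // obj_rel)" for b
    proof
      show "b = E_obj (obj_rel `` {R_obj b})" by (simp add: E_obj_class eval_R_obj)
      show "obj_rel `` {R_obj b} \<in> IFX_obj // obj_rel" using R_obj_in by (rule quotientI)
    qed
    then show ?thesis by auto
  qed
  ultimately show ?thesis by (simp add: bij_betw_def)
qed

lemma E_mor_bij: "bij_betw E_mor (IFX_mor // mor_rel) (Mor TF)"
proof -
  have "inj_on E_mor (IFX_mor // mor_rel)"
  proof (rule inj_onI)
    fix A B assume A: "A \<in> IFX_mor // mor_rel" and B: "B \<in> IFX_mor // mor_rel" and e: "E_mor A = E_mor B"
    obtain a where a: "a \<in> IFX_mor" "A = mor_rel `` {a}" using A by (auto elim: quotientE)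
    obtain b where b: "b \<in> IFX_mor" "B = mor_rel `` {b}" using B by (auto elim: quotientE)
    have "eval_mor a = eval_mor b" using e a b by (simp add: E_mor_class)
    then have "(a, b) \<in> mor_rel"
    proof -
      have sy: "sym mor_rel" and tr: "trans mor_rel" using equiv_mor by (auto simp: equiv_def)
      have "(a, R_mor (fst (eval_mor a)) (snd (eval_mor a))) \<in> mor_rel" using mor_rel_R[OF a(1)] by simp
      moreover have "(R_mor (fst (eval_mor b)) (snd (eval_mor b)), b) \<in> mor_rel" using mor_rel_R[OF b(1)] sy \<open>eval_mor a = eval_mor b\<close> by (auto dest: symD)
      ultimately show ?thesis using \<open>eval_mor a = eval_mor b\<close> tr by (auto dest: transD)
    qed
    then show "A = B" using a b equiv_class_eq[OF equiv_mor] by simp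
  qed
  moreover have "E_mor ` (IFX_mor // mor_rel) = Mor TF"
  proof
    show "E_mor ` (IFX_mor // mor_rel) \<subseteq> Mor TF"
    proof
      fix x assume "x \<in> E_mor ` (IFX_mor // mor_rel)"
      then obtain a where a: "a \<in> IFX_mor" "x = E_mor (mor_rel `` {a})" by (auto elim!: quotientE)
      then show "x \<in> Mor TF" by (auto simp: E_mor_class eval_mor_def TF_def IFX_mor_def)
    qed
    show "Mor TF \<subseteq> E_mor ` (IFX_mor // mor_rel)"
    proof
      fix x assume "x \<in> Mor TF"
      then obtain g b where x: "x = (g, b)" "g \<in> dhom (length b) (length g)" by (auto simp: TF_def)
      show "x \<in> E_mor ` (IFX_mor // mor_rel)"
      proof
        show "x = E_mor (mor_rel `` {R_mor g b})" by (simp add: E_mor_class eval_R_mor x)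
        show "mor_rel `` {R_mor g b} \<in> IFX_mor // mor_rel" using R_mor_in[OF x(2)] by (rule quotientI)
      qed
    qed
  qed
  ultimately show ?thesis by (simp add: bij_betw_def)
qed


theorem lemma3p7:
  shows "(\<forall>(a, b) \<in> obj_rel. eval_obj a = eval_obj b)
       \<and> (\<forall>(a, b) \<in> mor_rel. eval_mor a = eval_mor b)
       \<and> cat_iso IFX_quot TF E_obj E_mor"
proof (intro conjI)
  show "\<forall>(a, b) \<in> obj_rel. eval_obj a = eval_obj b" using obj_rel_eval by blast
  show "\<forall>(a, b) \<in> mor_rel. eval_mor a = eval_mor b" using mor_rel_eval by blast
  have domcod: "E_obj (Dom IFX_quot A) = Dom TF (E_mor A) \<and> E_obj (Cod IFX_quot A) = Cod TF (E_mor A)"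
    if A: "A \<in> Mor IFX_quot" for A
  proof -
    obtain \<alpha> where \<alpha>: "\<alpha> \<in> IFX_mor" "A = mor_rel `` {\<alpha>}"
      using A by (auto simp: IFX_quot_def elim: quotientE)
    define a where "a = (SOME a. a \<in> A)"
    have aa: "(\<alpha>, a) \<in> mor_rel" unfolding a_def \<alpha>(2) by (rule some_mor)
    have EA: "E_mor A = eval_mor a" using \<alpha>(2) mor_rel_eval[OF aa] by (simp add: E_mor_class)
    have Q: "Qm a" by (rule Qm_class[OF aa \<alpha>(1)])
    obtain m f g y where a4: "a = (m, f, g, y)" by (cases a rule: prod_cases4)
    have "E_obj (Dom IFX_quot A) = HF f y"
      by (simp add: IFX_quot_def a_def[symmetric] E_obj_class a4 IFX_dom_def eval_obj_def)
    moreover have "E_obj (Cod IFX_quot A) = HF (dh_comp g f) y"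
      by (simp add: IFX_quot_def a_def[symmetric] E_obj_class a4 IFX_cod_def eval_obj_def)
    moreover have "HF (dh_comp g f) y = HF g (HF f y)"
      using Q a4 by (intro HF_comp) (simp add: Qm_def)
    ultimately show ?thesis using EA a4 by (simp add: TF_def eval_mor_def)
  qed
  have idm: "E_mor (Idm IFX_quot X) = Idm TF (E_obj X)" if X: "X \<in> Obj IFX_quot" for X
  proof -
    define x where "x = (SOME x. x \<in> X)"
    obtain \<xi> where \<xi>: "\<xi> \<in> IFX_obj" "X = obj_rel `` {\<xi>}"
      using X by (auto simp: IFX_quot_def elim: quotientE)
    have xx: "(\<xi>, x) \<in> obj_rel" unfolding x_def \<xi>(2) by (rule some_obj)
    have EX: "E_obj X = eval_obj x" using \<xi>(2) obj_rel_eval[OF xx] by (simp add: E_obj_class)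
    obtain m f y where x3: "x = (m, f, y)" by (cases x rule: prod_cases3)
    show ?thesis
      by (simp add: IFX_quot_def x_def[symmetric] E_mor_class EX x3 IFX_id_def eval_mor_def
          eval_obj_def TF_def)
  qed
  have comp: "E_mor (Comp IFX_quot B A) = Comp TF (E_mor B) (E_mor A)"
    if A: "A \<in> Mor IFX_quot" and B: "B \<in> Mor IFX_quot" and cd: "Cod IFX_quot A = Dom IFX_quot B" for A B
  proof -
    obtain \<alpha> where \<alpha>: "\<alpha> \<in> IFX_mor" "A = mor_rel `` {\<alpha>}"
      using A by (auto simp: IFX_quot_def elim: quotientE)
    obtain \<beta> where \<beta>: "\<beta> \<in> IFX_mor" "B = mor_rel `` {\<beta>}"
      using B by (auto simp: IFX_quot_def elim: quotientE)
    define a where "a = (SOME a. a \<in> A)"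
    define b0 where "b0 = (SOME a. a \<in> B)"
    have aa: "(\<alpha>, a) \<in> mor_rel" unfolding a_def \<alpha>(2) by (rule some_mor)
    have bb: "(\<beta>, b0) \<in> mor_rel" unfolding b0_def \<beta>(2) by (rule some_mor)
    have "obj_rel `` {IFX_cod a} = obj_rel `` {IFX_dom b0}"
      using cd by (simp add: IFX_quot_def a_def[symmetric] b0_def[symmetric])
    then have r1: "(IFX_dom b0, IFX_cod a) \<in> obj_rel"
      using equiv_obj by (metis eq_equiv_class_iff UNIV_I)
    have r2: "(IFX_dom \<beta>, IFX_dom b0) \<in> obj_rel" by (rule dom_proj[OF bb])
    have r: "(IFX_dom \<beta>, IFX_cod a) \<in> obj_rel"
      using r1 r2 equiv_obj by (meson equiv_def transD)
    obtain mb fb gb yb where b4: "\<beta> = (mb, fb, gb, yb)" by (cases \<beta> rule: prod_cases4)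
    have gb: "gb \<in> dhom (length fb) (length gb)" using \<beta>(1) b4 by (simp add: IFX_mor_def)
    define c where "c = IFX_cod a"
    have "((mb, fb, gb, yb), (fst c, fst (snd c), gb, snd (snd c))) \<in> mor_rel"
      using lift[of "IFX_dom \<beta>" c mb fb yb gb] r gb b4 by (simp add: c_def IFX_dom_def)
    then have ex: "(fst c, fst (snd c), gb, snd (snd c)) \<in> B \<and> IFX_dom (fst c, fst (snd c), gb, snd (snd c)) = IFX_cod a"
      using \<beta>(2) b4 by (simp add: IFX_dom_def c_def split: prod.splits)
    define b where "b = (SOME b. b \<in> B \<and> IFX_dom b = IFX_cod a)"
    have b: "b \<in> B \<and> IFX_dom b = IFX_cod a"
      unfolding b_def using ex by (rule someI)
    have EB: "E_mor B = eval_mor b"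
      using \<beta>(2) b mor_rel_eval[of \<beta> b] by (simp add: E_mor_class)
    have EA: "E_mor A = eval_mor a" using \<alpha>(2) mor_rel_eval[OF aa] by (simp add: E_mor_class)
    obtain m f g y where a4: "a = (m, f, g, y)" by (cases a rule: prod_cases4)
    obtain m' f' k y' where b4': "b = (m', f', k, y')" by (cases b rule: prod_cases4)
    have "m' = m" "f' = dh_comp g f" "y' = y" using b a4 b4' by (auto simp: IFX_dom_def IFX_cod_def)
    have "Comp IFX_quot B A = mor_rel `` {IFX_comp b a}"
      by (simp add: IFX_quot_def a_def[symmetric] b_def[symmetric] Let_def)
    then have "Comp IFX_quot B A = mor_rel `` {(m, f, dh_comp k g, y)}"
      by (simp add: a4 b4' IFX_comp_def)
    then show ?thesis
      using EA EB a4 b4' by (simp add: E_mor_class eval_mor_def TF_def)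
  qed
  show "cat_iso IFX_quot TF E_obj E_mor"
    unfolding cat_iso_def
    using E_obj_bij E_mor_bij domcod idm comp
    by (simp add: IFX_quot_def TF_def)
qed

end
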